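(* Let $(X,d)$ be a separable metric space, $T\colon X\to X$ a Borel measurable map and $\mu$ a $T$-invariant Borel probability measure on $X$ such that $(X,T,\mu)$ is weakly mixing. Let $(s_n)_{n\ge1}$ be a scale sequence which is either monotone or steady. Then the proximality gauge $\psi(x,y)=\liminf_{n\to\infty} s_n\, d(T^nx,T^ny)$ is $\mu\times\mu$-almost everywhere constant (its push-forward of $\mu\times\mu$ is a Dirac measure on $[0,\infty]$). In particular, writing $\psi_\alpha(x,y)=\liminf_{n} n^\alpha d(T^nx,T^ny)$ and \[C_\psi=\sup\big(\{0\}\cup\{\alpha>0:\ \psi_\alpha(x,y)=0 \text{ for } \mu\times\mu\text{-a.e. }(x,y)\}\big),\] one has $\psi_\alpha=0$ $\mu\times\mu$-a.e. if $0\le\alpha<C_\psi$, and $\psi_\alpha=\infty$ $\mu\times\mu$-a.e. if $C_\psi<\alpha<\infty$.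
   Context: A scale sequence is a sequence $(s_n)_{n\ge1}$ of positive reals with $s_n\to\infty$. It is monotone if $s_{n+1}\ge s_n$ for all sufficiently large $n$, and steady if $\lim_{n\to\infty}s_{n+1}/s_n=1$. Weakly mixing means $T\times T$ is ergodic with respect to $\mu\times\mu$. *)

theory Defs
  imports "HOL-Probability.Probability"
begin

definition measure_preserving_map :: "'a measure \<Rightarrow> ('a \<Rightarrow> 'a) \<Rightarrow> bool" where
  "measure_preserving_map M f \<longleftrightarrow> f \<in> measurable M M \<and> distr M M f = M"

definition ergodic_map :: "'a measure \<Rightarrow> ('a \<Rightarrow> 'a) \<Rightarrow> bool" where
  "ergodic_map M f \<longleftrightarrow> measure_preserving_map M f \<and>
     (\<forall>A \<in> sets M. f -` A \<inter> space M = A \<longrightarrow> measure M A = 0 \<or> measure M A = 1)"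

definition weakly_mixing :: "'a measure \<Rightarrow> ('a \<Rightarrow> 'a) \<Rightarrow> bool" where
  "weakly_mixing M T \<longleftrightarrow> ergodic_map (M \<Otimes>\<^sub>M M) (\<lambda>(x, y). (T x, T y))"

text \<open>Scale sequences (indexed from 1; the value at 0 is irrelevant).\<close>
definition scale_sequence :: "(nat \<Rightarrow> real) \<Rightarrow> bool" where
  "scale_sequence s \<longleftrightarrow> (\<forall>n\<ge>1. s n > 0) \<and> filterlim s at_top sequentially"

definition monotone_scale :: "(nat \<Rightarrow> real) \<Rightarrow> bool" where
  "monotone_scale s \<longleftrightarrow> (\<forall>\<^sub>F n in sequentially. s (Suc n) \<ge> s n)"

definition steady_scale :: "(nat \<Rightarrow> real) \<Rightarrow> bool" where
  "steady_scale s \<longleftrightarrow> (\<lambda>n. s (Suc n) / s n) \<longlonglongrightarrow> 1"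

definition prox_gauge :: "(nat \<Rightarrow> real) \<Rightarrow> ('a::metric_space \<Rightarrow> 'a) \<Rightarrow> 'a \<Rightarrow> 'a \<Rightarrow> ereal" where
  "prox_gauge s T x y = liminf (\<lambda>n. ereal (s n * dist ((T ^^ n) x) ((T ^^ n) y)))"

definition prox_gauge_pow :: "real \<Rightarrow> ('a::metric_space \<Rightarrow> 'a) \<Rightarrow> 'a \<Rightarrow> 'a \<Rightarrow> ereal" where
  "prox_gauge_pow \<alpha> T = prox_gauge (\<lambda>n. real n powr \<alpha>) T"

definition crit_exponent :: "'a measure \<Rightarrow> ('a::metric_space \<Rightarrow> 'a) \<Rightarrow> ereal" where
  "crit_exponent M T = Sup (ereal ` ({0} \<union>
     {\<alpha>. \<alpha> > 0 \<and> (AE z in M \<Otimes>\<^sub>M M. prox_gauge_pow \<alpha> T (fst z) (snd z) = 0)}))"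

end

theory Submission imports Defs "HOL-Real_Asymp.Real_Asymp" begin

lemma measurable_funpow_self:
  assumes "f \<in> measurable M M" shows "(f ^^ n) \<in> measurable M M"
  by (induction n) (auto intro: measurable_compose[OF _ assms])

lemma rat_between_ereal:
  fixes x y :: ereal assumes "x < y" shows "\<exists>q\<in>\<rat>. x < ereal q \<and> ereal q < y"
proof -
  obtain r1 where r1: "x < ereal r1" "ereal r1 < y" using ereal_dense2[OF assms] by blast
  obtain r2 where r2: "ereal r1 < ereal r2" "ereal r2 < y" using ereal_dense2[OF r1(2)] by blast
  obtain q where "q \<in> \<rat>" "r1 < q" "q < r2" using Rats_dense_in_real[of r1 r2] r2(1) by auto
  moreover have "ereal r1 < ereal q" "ereal q < ereal r2" using \<open>r1 < q\<close> \<open>q < r2\<close> by auto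
  ultimately show ?thesis using r1 r2 by (meson less_trans)
qed

lemma ereal_Inf_rats: fixes x :: ereal shows "x = Inf (ereal ` {q\<in>\<rat>. x < ereal q})"
proof (rule antisym)
  show "x \<le> Inf (ereal ` {q\<in>\<rat>. x < ereal q})" by (rule Inf_greatest) auto
  show "Inf (ereal ` {q\<in>\<rat>. x < ereal q}) \<le> x"
  proof (rule dense_ge)
    fix y assume "x < y"
    then obtain q where "q\<in>\<rat>" "x < ereal q" "ereal q < y" using rat_between_ereal by blast
    then have "Inf (ereal ` {q\<in>\<rat>. x < ereal q}) \<le> ereal q" by (intro Inf_lower) auto
    then show "Inf (ereal ` {q\<in>\<rat>. x < ereal q}) \<le> y" using \<open>ereal q < y\<close> by simp
  qed
qed

lemma invariant_sub:
  assumes pp: "prob_space P" and erg: "ergodic_map P S" and A: "A \<in> sets P" and sub: "A \<subseteq> S -` A"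
  shows "measure P A = 0 \<or> measure P A = 1"
proof -
  from erg have Sm: "S \<in> measurable P P" and dS: "distr P P S = P"
    and zo: "\<forall>A\<in>sets P. S -` A \<inter> space P = A \<longrightarrow> measure P A = 0 \<or> measure P A = 1"
    by (auto simp: ergodic_map_def measure_preserving_map_def)
  have Asp: "A \<subseteq> space P" using sets.sets_into_space[OF A] .
  define An where "An n = (S ^^ n) -` A \<inter> space P" for n
  have An0: "An 0 = A" using Asp by (auto simp: An_def)
  have AnS: "An (Suc n) = S -` An n \<inter> space P" for n
    using measurable_space[OF Sm] by (auto simp: An_def funpow_swap1)
  have Ans: "An n \<in> sets P" for n
    by (induction n) (auto simp: An0 AnS A intro: measurable_sets[OF Sm])
  have mAn: "emeasure P (An n) = emeasure P A" for n
  proof (induction n)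
    case 0 then show ?case by (simp add: An0)
  next
    case (Suc n)
    have "emeasure P (An (Suc n)) = emeasure (distr P P S) (An n)"
      by (simp add: AnS emeasure_distr[OF Sm Ans])
    then show ?case using dS Suc by simp
  qed
  have inc: "An n \<subseteq> An (Suc n)" for n
  proof (induction n)
    case 0 then show ?case using sub Asp by (auto simp: An0 AnS)
  next
    case (Suc n) then show ?case by (auto simp: AnS[of "Suc n"] AnS[of n])
  qed
  define B where "B = (\<Union>n. An n)"
  have Bs: "B \<in> sets P" using Ans by (auto simp: B_def)
  have "S -` B \<inter> space P = (\<Union>n. An (Suc n))" by (auto simp: B_def AnS)
  also have "\<dots> = B"
  proof
    show "(\<Union>n. An (Suc n)) \<subseteq> B" by (auto simp: B_def)
    show "B \<subseteq> (\<Union>n. An (Suc n))"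
    proof
      fix z assume "z \<in> B"
      then obtain n where "z \<in> An n" by (auto simp: B_def)
      then show "z \<in> (\<Union>n. An (Suc n))" using inc[of n] by auto
    qed
  qed
  finally have Binv: "S -` B \<inter> space P = B" .
  have "emeasure P B = (SUP n. emeasure P (An n))"
  proof -
    have "range An \<subseteq> sets P" using Ans by auto
    moreover have "incseq An" using inc by (simp add: incseq_SucI)
    ultimately show ?thesis using SUP_emeasure_incseq[of An P] by (simp add: B_def)
  qed
  also have "\<dots> = emeasure P A" by (simp add: mAn)
  finally have "measure P B = measure P A" by (simp add: measure_def)
  then show ?thesis using zo Bs Binv by metis
qed

lemma ae_const:
  fixes f :: "'a \<Rightarrow> ereal"
  assumes pp: "prob_space P" and erg: "ergodic_map P S" and fm: "f \<in> borel_measurable P"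
    and le: "\<And>z. z \<in> space P \<Longrightarrow> f (S z) \<le> f z"
  shows "\<exists>c. AE z in P. f z = c"
proof -
  interpret prob_space P by (rule pp)
  have Sm: "S \<in> measurable P P" using erg by (auto simp: ergodic_map_def measure_preserving_map_def)
  have [measurable]: "f \<in> borel_measurable P" by (rule fm)
  define A where "A t = {z\<in>space P. f z < t}" for t
  have As: "A t \<in> sets P" for t unfolding A_def by measurable
  have zo: "measure P (A t) = 0 \<or> measure P (A t) = 1" for t
    apply (rule invariant_sub[OF pp erg As])
    using measurable_space[OF Sm] le by (auto simp: A_def intro: le_less_trans)
  define Q where "Q = {q\<in>\<rat>. measure P (A (ereal q)) = 1}"
  have "AE z in P. \<forall>q\<in>\<rat>. (f z < ereal q \<longleftrightarrow> q \<in> Q)"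
  proof (subst AE_ball_countable[OF countable_rat], intro ballI)
    fix q :: real assume q: "q\<in>\<rat>"
    show "AE z in P. (f z < ereal q \<longleftrightarrow> q \<in> Q)"
    proof (cases "measure P (A (ereal q)) = 1")
      case True
      then have "AE z in P. z \<in> A (ereal q)" by (rule AE_prob_1)
      then show ?thesis by (rule AE_mp) (use True q in \<open>auto simp: Q_def A_def intro!: AE_I2\<close>)
    next
      case False
      then have "measure P (A (ereal q)) = 0" using zo by auto
      then have "A (ereal q) \<in> null_sets P" using As by (simp add: emeasure_eq_measure null_sets_def)
      then have "AE z in P. z \<notin> A (ereal q)" by (rule AE_not_in)
      then show ?thesis by (rule AE_mp) (use False q in \<open>auto simp: Q_def A_def intro!: AE_I2\<close>)
    qed
  qed
  then have "AE z in P. f z = Inf (ereal ` Q)"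
  proof (rule AE_mp, intro AE_I2 impI)
    fix z assume "\<forall>q\<in>\<rat>. (f z < ereal q \<longleftrightarrow> q \<in> Q)"
    then have "Q = {q\<in>\<rat>. f z < ereal q}" using Q_def by auto
    then show "f z = Inf (ereal ` Q)" using ereal_Inf_rats[of "f z"] by simp
  qed
  then show ?thesis by blast
qed

lemma ereal_dist_measurable:
  fixes f g :: "'b \<Rightarrow> 'a::metric_space"
  assumes sep: "separable_space (euclidean :: 'a topology)"
    and f: "f \<in> M \<rightarrow>\<^sub>M borel" and g: "g \<in> M \<rightarrow>\<^sub>M borel"
  shows "(\<lambda>z. ereal (dist (f z) (g z))) \<in> borel_measurable M"
proof -
  obtain C :: "'a set" where C: "countable C" "closure C = UNIV"
    using sep unfolding separable_space_def by (metis euclidean_closure_of topspace_euclidean)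
  have "C \<noteq> {}" using C(2) by (metis closure_empty empty_not_UNIV)
  define e where "e = from_nat_into C"
  have eC: "range e = C" unfolding e_def by (rule range_from_nat_into[OF \<open>C\<noteq>{}\<close> C(1)])
  have eq: "ereal (dist a b) = (INF k. ereal (dist a (e k) + dist (e k) b))" for a b
  proof (rule antisym)
    show "ereal (dist a b) \<le> (INF k. ereal (dist a (e k) + dist (e k) b))"
      by (rule INF_greatest) (simp add: dist_triangle)
    show "(INF k. ereal (dist a (e k) + dist (e k) b)) \<le> ereal (dist a b)"
    proof (rule ereal_le_epsilon2)
      fix \<epsilon>::real assume "0<\<epsilon>"
      have "a \<in> closure C" using C(2) by auto
      then obtain c where "c\<in>C" "dist c a < \<epsilon>/2" using \<open>0<\<epsilon>\<close> closure_approachable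
        by (meson half_gt_zero)
      then obtain k where k: "e k = c" using eC by auto
      have "(INF k. ereal (dist a (e k) + dist (e k) b)) \<le> ereal (dist a (e k) + dist (e k) b)"
        by (rule INF_lower) simp
      also have "\<dots> \<le> ereal (dist a b + \<epsilon>)"
        using dist_triangle[of "e k" b a] \<open>dist c a < \<epsilon>/2\<close> k by (simp add: dist_commute)
      finally show "(INF k. ereal (dist a (e k) + dist (e k) b)) \<le> ereal (dist a b) + ereal \<epsilon>" by simp
    qed
  qed
  have cont: "(\<lambda>x. dist x c) \<in> borel_measurable borel" for c
    by (intro borel_measurable_continuous_onI continuous_intros)
  have m1[measurable]: "(\<lambda>z. dist (f z) (e k)) \<in> borel_measurable M" for k
    using measurable_compose[OF f cont] by simp
  have m2[measurable]: "(\<lambda>z. dist (e k) (g z)) \<in> borel_measurable M" for k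
    using measurable_compose[OF g cont, of "e k"] by (simp add: dist_commute[of "e k"] comp_def)
  have "(\<lambda>z. INF k. ereal (dist (f z) (e k) + dist (e k) (g z))) \<in> borel_measurable M"
    by (intro borel_measurable_INF borel_measurable_ereal borel_measurable_add m1 m2) auto
  moreover have "(\<lambda>z. ereal (dist (f z) (g z))) = (\<lambda>z. INF k. ereal (dist (f z) (e k) + dist (e k) (g z)))"
    by (rule ext) (rule eq)
  ultimately show ?thesis by simp
qed

lemma gauge_meas:
  fixes \<mu> :: "'a::metric_space measure"
  assumes sep: "separable_space (euclidean :: 'a topology)"
    and sets_mu: "sets \<mu> = sets borel" and T_meas: "T \<in> borel_measurable borel"
  shows "(\<lambda>z. prox_gauge s T (fst z) (snd z)) \<in> borel_measurable (\<mu> \<Otimes>\<^sub>M \<mu>)"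
proof -
  have Tn: "(T^^n) \<in> borel \<rightarrow>\<^sub>M borel" for n by (rule measurable_funpow_self[OF T_meas])
  have fst': "fst \<in> (\<mu> \<Otimes>\<^sub>M \<mu>) \<rightarrow>\<^sub>M borel"
    using measurable_fst[of \<mu> \<mu>] measurable_cong_sets[OF refl sets_mu] by blast
  have snd': "snd \<in> (\<mu> \<Otimes>\<^sub>M \<mu>) \<rightarrow>\<^sub>M borel"
    using measurable_snd[of \<mu> \<mu>] measurable_cong_sets[OF refl sets_mu] by blast
  have f1: "(\<lambda>z. (T^^n) (fst z)) \<in> (\<mu> \<Otimes>\<^sub>M \<mu>) \<rightarrow>\<^sub>M borel" for n
    using measurable_compose[OF fst' Tn] by (simp add: comp_def)
  have f2: "(\<lambda>z. (T^^n) (snd z)) \<in> (\<mu> \<Otimes>\<^sub>M \<mu>) \<rightarrow>\<^sub>M borel" for n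
    using measurable_compose[OF snd' Tn] by (simp add: comp_def)
  have [measurable]: "(\<lambda>z. ereal (dist ((T^^n) (fst z)) ((T^^n) (snd z)))) \<in> borel_measurable (\<mu> \<Otimes>\<^sub>M \<mu>)" for n
    by (rule ereal_dist_measurable[OF sep f1 f2])
  have [measurable]: "(\<lambda>z. ereal (s n * dist ((T^^n) (fst z)) ((T^^n) (snd z)))) \<in> borel_measurable (\<mu> \<Otimes>\<^sub>M \<mu>)" for n
  proof -
    have "(\<lambda>z. ereal (s n) * ereal (dist ((T^^n) (fst z)) ((T^^n) (snd z)))) \<in> borel_measurable (\<mu> \<Otimes>\<^sub>M \<mu>)"
      by measurable
    then show ?thesis by simp
  qed
  show ?thesis unfolding prox_gauge_def by measurable
qed

lemma gauge_shift_le: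
  assumes scale: "scale_sequence s" and ms: "monotone_scale s \<or> steady_scale s"
  shows "prox_gauge s T (T x) (T y) \<le> prox_gauge s T x y"
proof -
  define d where "d n = dist ((T^^n) x) ((T^^n) y)" for n
  have d0: "d n \<ge> 0" for n by (simp add: d_def)
  have lhs: "prox_gauge s T (T x) (T y) = liminf (\<lambda>n. ereal (s n * d (Suc n)))"
    by (simp add: prox_gauge_def d_def funpow_swap1)
  have rhs: "prox_gauge s T x y = liminf (\<lambda>n. ereal (s (Suc n) * d (Suc n)))"
    using liminf_shift[of "\<lambda>n. ereal (s n * d n)"] by (simp add: prox_gauge_def d_def)
  from ms show ?thesis
  proof
    assume "monotone_scale s"
    then have "eventually (\<lambda>n. ereal (s n * d (Suc n)) \<le> ereal (s (Suc n) * d (Suc n))) sequentially"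
      unfolding monotone_scale_def by (rule eventually_mono) (simp add: d0 mult_right_mono)
    then show ?thesis using lhs rhs Liminf_mono by metis
  next
    assume st: "steady_scale s"
    have pos: "eventually (\<lambda>n. s (Suc n) > 0) sequentially"
      using scale unfolding scale_sequence_def by (intro always_eventually) auto
    have "(\<lambda>n. inverse (s (Suc n) / s n)) \<longlonglongrightarrow> inverse 1"
      using st unfolding steady_scale_def by (intro tendsto_inverse) auto
    then have "(\<lambda>n. s n / s (Suc n)) \<longlonglongrightarrow> 1" by (simp add: inverse_divide)
    then have u: "(\<lambda>n. ereal (s n / s (Suc n))) \<longlonglongrightarrow> ereal 1" by simp
    have "liminf (\<lambda>n. ereal (s n / s (Suc n)) * ereal (s (Suc n) * d (Suc n)))
        = ereal 1 * liminf (\<lambda>n. ereal (s (Suc n) * d (Suc n)))"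
      by (rule ereal_liminf_lim_mult[OF u]) auto
    moreover have "liminf (\<lambda>n. ereal (s n / s (Suc n)) * ereal (s (Suc n) * d (Suc n)))
        = liminf (\<lambda>n. ereal (s n * d (Suc n)))"
      by (rule Liminf_eq, rule eventually_mono[OF pos]) simp
    ultimately show ?thesis using lhs rhs by simp
  qed
qed

lemma part1:
  fixes \<mu> :: "'a::metric_space measure" and T :: "'a \<Rightarrow> 'a" and s :: "nat \<Rightarrow> real"
  assumes sep: "separable_space (euclidean :: 'a topology)"
    and sets_mu: "sets \<mu> = sets borel"
    and prob: "prob_space \<mu>"
    and T_meas: "T \<in> borel_measurable borel"
    and wm: "weakly_mixing \<mu> T"
    and scale: "scale_sequence s"
    and mono_or_steady: "monotone_scale s \<or> steady_scale s"
  shows "\<exists>c::ereal. (AE z in \<mu> \<Otimes>\<^sub>M \<mu>. prox_gauge s T (fst z) (snd z) = c) \<and>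
            distr (\<mu> \<Otimes>\<^sub>M \<mu>) borel (\<lambda>z. prox_gauge s T (fst z) (snd z)) = return borel c"
proof -
  define P where "P = \<mu> \<Otimes>\<^sub>M \<mu>"
  define \<psi> where "\<psi> = (\<lambda>z. prox_gauge s T (fst z) (snd z))"
  have ppP: "prob_space P" unfolding P_def using prob prob by (rule prob_space_pair)
  have ergP: "ergodic_map P (\<lambda>(x,y). (T x, T y))" using wm by (simp add: weakly_mixing_def P_def)
  have mP: "\<psi> \<in> borel_measurable P" unfolding P_def \<psi>_def by (rule gauge_meas[OF sep sets_mu T_meas])
  have "\<exists>c. AE z in P. \<psi> z = c"
  proof (rule ae_const[OF ppP ergP mP])
    fix z :: "'a \<times> 'a"
    show "\<psi> ((\<lambda>(x,y). (T x, T y)) z) \<le> \<psi> z"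
      using gauge_shift_le[OF scale mono_or_steady] by (cases z) (simp add: \<psi>_def)
  qed
  then obtain c where ae: "AE z in P. \<psi> z = c" by blast
  interpret prob_space P by (rule ppP)
  have "distr P borel \<psi> = return borel c"
  proof (rule measure_eqI)
    show "sets (distr P borel \<psi>) = sets (return borel c)" by simp
    fix B assume "B \<in> sets (distr P borel \<psi>)"
    then have B: "B \<in> sets borel" by simp
    have Bs: "\<psi> -` B \<inter> space P \<in> sets P" using measurable_sets[OF mP B] .
    have "emeasure (distr P borel \<psi>) B = emeasure P (\<psi> -` B \<inter> space P)"
      by (rule emeasure_distr[OF mP B])
    also have "\<dots> = indicator B c"
    proof (cases "c \<in> B")
      case True
      have "emeasure P (\<psi> -` B \<inter> space P) = emeasure P (space P)"
      proof (rule emeasure_eq_AE[OF _ Bs sets.top])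
        show "AE z in P. (z \<in> \<psi> -` B \<inter> space P) = (z \<in> space P)"
          using ae by (rule AE_mp) (use True in \<open>auto intro!: AE_I2\<close>)
      qed
      then show ?thesis using True by (simp add: emeasure_space_1)
    next
      case False
      have "emeasure P (\<psi> -` B \<inter> space P) = emeasure P {}"
      proof (rule emeasure_eq_AE[OF _ Bs sets.empty_sets])
        show "AE z in P. (z \<in> \<psi> -` B \<inter> space P) = (z \<in> {})"
          using ae by (rule AE_mp) (use False in \<open>auto intro!: AE_I2\<close>)
      qed
      then show ?thesis using False by simp
    qed
    also have "\<dots> = emeasure (return borel c) B" using B by simp
    finally show "emeasure (distr P borel \<psi>) B = emeasure (return borel c) B" .
  qed
  then show ?thesis using ae unfolding P_def \<psi>_def by blast
qed

lemma gauge_pow_mono: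
  assumes "\<alpha> \<le> \<beta>" "prox_gauge_pow \<beta> T x y = 0" shows "prox_gauge_pow \<alpha> T x y = 0"
proof -
  have "prox_gauge_pow \<alpha> T x y \<le> prox_gauge_pow \<beta> T x y"
    unfolding prox_gauge_pow_def prox_gauge_def
  proof (rule Liminf_mono, rule eventually_sequentiallyI[of 1])
    fix n :: nat assume "1 \<le> n"
    then have "real n powr \<alpha> \<le> real n powr \<beta>" using assms(1) by (intro powr_mono) auto
    then show "ereal (real n powr \<alpha> * dist ((T ^^ n) x) ((T ^^ n) y))
        \<le> ereal (real n powr \<beta> * dist ((T ^^ n) x) ((T ^^ n) y))"
      by (simp add: mult_right_mono)
  qed
  moreover have "0 \<le> prox_gauge_pow \<alpha> T x y"
    unfolding prox_gauge_pow_def prox_gauge_def by (intro Liminf_bounded always_eventually) simp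
  ultimately show ?thesis using assms(2) by simp
qed

lemma gauge_pow_fin:
  assumes "\<beta> < \<alpha>" "prox_gauge_pow \<alpha> T x y \<noteq> \<infinity>" shows "prox_gauge_pow \<beta> T x y = 0"
proof -
  define d where "d n = dist ((T ^^ n) x) ((T ^^ n) y)" for n
  define X where "X = (\<lambda>n. ereal (real n powr \<alpha> * d n))"
  define L where "L = liminf X"
  have d0: "0 \<le> d n" for n by (simp add: d_def)
  have L0: "0 \<le> L" unfolding L_def X_def by (intro Liminf_bounded always_eventually) (simp add: d0)
  have Lfin: "L \<noteq> \<infinity>" using assms(2)
    by (simp add: L_def X_def d_def prox_gauge_pow_def prox_gauge_def)
  obtain l where l: "L = ereal l" "0 \<le> l" using L0 Lfin by (cases L) auto
  have ge: "0 \<le> prox_gauge_pow \<beta> T x y"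
    unfolding prox_gauge_pow_def prox_gauge_def by (intro Liminf_bounded always_eventually) simp
  have le: "prox_gauge_pow \<beta> T x y \<le> 0"
  proof (rule ereal_le_epsilon2)
    fix \<epsilon>::real assume "0<\<epsilon>"
    define \<delta> where "\<delta> = \<epsilon>/(l+1)"
    have \<delta>: "0 < \<delta>" using \<open>0<\<epsilon>\<close> l by (simp add: \<delta>_def)
    have "(\<lambda>n. real n powr (\<beta> - \<alpha>)) \<longlonglongrightarrow> 0"
      by (rule tendsto_neg_powr) (use assms(1) filterlim_real_sequentially in auto)
    then have ev: "eventually (\<lambda>n. real n powr (\<beta>-\<alpha>) < \<delta>) sequentially" using \<delta> by (rule order_tendstoD(2))
    have "eventually (\<lambda>n. ereal (real n powr \<beta> * d n) \<le> ereal \<delta> * X n) sequentially"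
      using ev eventually_ge_at_top[of 1]
    proof eventually_elim
      case (elim n)
      have eq: "real n powr \<beta> = real n powr (\<beta>-\<alpha>) * real n powr \<alpha>"
        using elim(2) by (simp add: powr_add[symmetric])
      have "real n powr (\<beta>-\<alpha>) * (real n powr \<alpha> * d n) \<le> \<delta> * (real n powr \<alpha> * d n)"
        using elim(1) d0 by (intro mult_right_mono) auto
      then show ?case by (simp add: X_def eq mult.assoc)
    qed
    then have "prox_gauge_pow \<beta> T x y \<le> liminf (\<lambda>n. ereal \<delta> * X n)"
      unfolding prox_gauge_pow_def prox_gauge_def d_def by (rule Liminf_mono)
    also have "\<dots> = ereal \<delta> * L"
      unfolding L_def by (rule ereal_liminf_lim_mult[OF tendsto_const]) (use \<delta> in auto)
    also have "\<dots> \<le> 0 + ereal \<epsilon>"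
    proof -
      have "\<delta> * l \<le> \<epsilon>"
      proof -
        have "\<delta> * l = \<epsilon> * (l / (l+1))" using l by (simp add: \<delta>_def)
        also have "\<dots> \<le> \<epsilon> * 1" using l \<open>0<\<epsilon>\<close> by (intro mult_left_mono) auto
        finally show ?thesis by simp
      qed
      then show ?thesis using l by simp
    qed
    finally show "prox_gauge_pow \<beta> T x y \<le> 0 + ereal \<epsilon>" .
  qed
  show ?thesis using ge le by simp
qed

theorem proposition3p9:
  fixes \<mu> :: "'a::metric_space measure" and T :: "'a \<Rightarrow> 'a" and s :: "nat \<Rightarrow> real"
  assumes sep: "separable_space (euclidean :: 'a topology)"
    and sets_mu: "sets \<mu> = sets borel"
    and prob: "prob_space \<mu>"
    and T_meas: "T \<in> borel_measurable borel"
    and T_inv: "distr \<mu> \<mu> T = \<mu>"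
    and wm: "weakly_mixing \<mu> T"
    and scale: "scale_sequence s"
    and mono_or_steady: "monotone_scale s \<or> steady_scale s"
  shows "(\<exists>c::ereal. (AE z in \<mu> \<Otimes>\<^sub>M \<mu>. prox_gauge s T (fst z) (snd z) = c) \<and>
            distr (\<mu> \<Otimes>\<^sub>M \<mu>) borel (\<lambda>z. prox_gauge s T (fst z) (snd z)) = return borel c)
      \<and> (\<forall>\<alpha>::real. 0 \<le> \<alpha> \<and> ereal \<alpha> < crit_exponent \<mu> T \<longrightarrow>
            (AE z in \<mu> \<Otimes>\<^sub>M \<mu>. prox_gauge_pow \<alpha> T (fst z) (snd z) = 0))
      \<and> (\<forall>\<alpha>::real. crit_exponent \<mu> T < ereal \<alpha> \<longrightarrow>
            (AE z in \<mu> \<Otimes>\<^sub>M \<mu>. prox_gauge_pow \<alpha> T (fst z) (snd z) = \<infinity>))"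
proof -
  have P1: "\<exists>c::ereal. (AE z in \<mu> \<Otimes>\<^sub>M \<mu>. prox_gauge s T (fst z) (snd z) = c) \<and>
            distr (\<mu> \<Otimes>\<^sub>M \<mu>) borel (\<lambda>z. prox_gauge s T (fst z) (snd z)) = return borel c"
    by (rule part1[OF sep sets_mu prob T_meas wm scale mono_or_steady])
  define Cr where "Cr = crit_exponent \<mu> T"
  define SA where "SA = {\<alpha>. \<alpha> > 0 \<and> (AE z in \<mu> \<Otimes>\<^sub>M \<mu>. prox_gauge_pow \<alpha> T (fst z) (snd z) = 0)}"
  have Cr_def': "Cr = Sup (ereal ` ({0} \<union> SA))" by (simp add: Cr_def crit_exponent_def SA_def)
  have Cr0: "0 \<le> Cr" unfolding Cr_def' by (rule Sup_upper2[of "ereal 0"]) auto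
  have upper: "ereal \<beta> \<le> Cr" if "\<beta> \<in> SA" for \<beta> unfolding Cr_def' by (rule Sup_upper) (use that in auto)
  have P2: "\<forall>\<alpha>::real. 0 \<le> \<alpha> \<and> ereal \<alpha> < Cr \<longrightarrow>
            (AE z in \<mu> \<Otimes>\<^sub>M \<mu>. prox_gauge_pow \<alpha> T (fst z) (snd z) = 0)"
  proof (intro allI impI, elim conjE)
    fix \<alpha>::real assume a0: "0 \<le> \<alpha>" and a: "ereal \<alpha> < Cr"
    have "\<exists>x\<in>ereal ` ({0} \<union> SA). ereal \<alpha> < x" using a unfolding Cr_def' by (simp only: less_Sup_iff)
    then obtain x where "x \<in> ereal ` ({0} \<union> SA)" "ereal \<alpha> < x" by blast
    then obtain \<beta> where "\<beta> \<in> SA" "\<alpha> < \<beta>" using a0 by auto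
    then have ae: "AE z in \<mu> \<Otimes>\<^sub>M \<mu>. prox_gauge_pow \<beta> T (fst z) (snd z) = 0" and ab: "\<alpha> \<le> \<beta>"
      by (auto simp: SA_def)
    show "AE z in \<mu> \<Otimes>\<^sub>M \<mu>. prox_gauge_pow \<alpha> T (fst z) (snd z) = 0"
      using ae by (rule AE_mp) (auto intro!: AE_I2 intro: gauge_pow_mono[OF ab])
  qed
  have P3: "\<forall>\<alpha>::real. Cr < ereal \<alpha> \<longrightarrow>
            (AE z in \<mu> \<Otimes>\<^sub>M \<mu>. prox_gauge_pow \<alpha> T (fst z) (snd z) = \<infinity>)"
  proof (intro allI impI)
    fix \<alpha>::real assume a: "Cr < ereal \<alpha>"
    have "0 < ereal \<alpha>" using Cr0 a by (rule le_less_trans)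
    then have a0: "0 < \<alpha>" by simp
    have sc: "scale_sequence (\<lambda>n. real n powr \<alpha>)" unfolding scale_sequence_def using a0
      by (auto intro!: filterlim_compose[OF real_powr_at_top filterlim_real_sequentially])
    have mo: "monotone_scale (\<lambda>n. real n powr \<alpha>)" unfolding monotone_scale_def using a0
      by (intro always_eventually allI powr_mono2) auto
    obtain c where c: "AE z in \<mu> \<Otimes>\<^sub>M \<mu>. prox_gauge (\<lambda>n. real n powr \<alpha>) T (fst z) (snd z) = c"
      using part1[OF sep sets_mu prob T_meas wm sc] mo by blast
    have "c = \<infinity>"
    proof (rule ccontr)
      assume cf: "c \<noteq> \<infinity>"
      obtain \<beta> where b: "Cr < ereal \<beta>" "ereal \<beta> < ereal \<alpha>" using ereal_dense2[OF a] by blast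
      have "0 < ereal \<beta>" using Cr0 b(1) by (rule le_less_trans)
      then have b0: "0 < \<beta>" by simp
      have "AE z in \<mu> \<Otimes>\<^sub>M \<mu>. prox_gauge_pow \<beta> T (fst z) (snd z) = 0"
        using c
      proof (rule AE_mp, intro AE_I2 impI)
        fix z :: "'a \<times> 'a"
        assume "prox_gauge (\<lambda>n. real n powr \<alpha>) T (fst z) (snd z) = c"
        then have "prox_gauge_pow \<alpha> T (fst z) (snd z) \<noteq> \<infinity>" using cf by (simp add: prox_gauge_pow_def)
        moreover have "\<beta> < \<alpha>" using b(2) by simp
        ultimately show "prox_gauge_pow \<beta> T (fst z) (snd z) = 0" by (intro gauge_pow_fin)
      qed
      then have "\<beta> \<in> SA" using b0 by (simp add: SA_def)
      then have "ereal \<beta> \<le> Cr" by (rule upper)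
      then show False using b(1) by simp
    qed
    then show "AE z in \<mu> \<Otimes>\<^sub>M \<mu>. prox_gauge_pow \<alpha> T (fst z) (snd z) = \<infinity>"
      using c by (simp add: prox_gauge_pow_def)
  qed
  show ?thesis using P1 P2 P3 unfolding Cr_def by blast
qed

end
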